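(* Let $\{f(x;\theta)\}_{\theta\in\Theta}$ be an affine exponential family (defined in the context) with log-normalizer $F$. Let $p(x)=f(x;\theta)$ and $q_u(x)=f(x;\theta_u)$, $u=1,\dots,l$, be members of this family, let $w_1,\dots,w_l>0$ with $\sum_{u=1}^l w_u=1$, and let $\lambda\neq 0$ and an integer $i\geq 2$ be given. Then the power chi pseudo-distance between $p$ and the mixture $\sum_{u=1}^l w_uq_u$ is finite and given by the closed-form finite expression $$ \chi_{i,\lambda}^\pm\Big(p:\sum_{u=1}^{l} w_u q_u\Big)=\sum_{s=0}^i \binom{i}{s}(-\lambda)^{i-s}\sum_{\substack{\alpha_1+\dots+\alpha_l=s\\ \alpha_u\in\mathbb{N}\cup\{0\}}}\binom{s}{\alpha_1,\ldots,\alpha_l}\Big(\prod_{u=1}^l w_u^{\alpha_u}\Big)\exp\Big(F\Big((1-s)\theta+\sum_{u=1}^l\alpha_u\theta_u\Big)-\Big((1-s)F(\theta)+\sum_{u=1}^l\alpha_uF(\theta_u)\Big)\Big). $$ In particular, it can be computed in closed form from $F$, the parameters, the weights and $\lambda$.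
   Context: Let $\mu$ be a $\sigma$-finite positive base measure on a measurable space $\mathcal{X}$. An exponential family is a set of probability densities (w.r.t. $\mu$) of the form $f(x;\theta)=\exp(t(x)^\top\theta-F(\theta)+k(x))\,1_{\mathcal{X}}(x)$, with sufficient statistic $t:\mathcal{X}\to\mathbb{R}^D$, carrier term $k$, natural parameter $\theta$ in the natural parameter space $\Theta=\{\theta\in\mathbb{R}^D:\int \exp(t(x)^\top\theta+k(x))\,d\mu(x)<\infty\}$, and log-normalizer $F(\theta)=\log\int\exp(t(x)^\top\theta+k(x))\,d\mu(x)$. It is called an affine exponential family if its natural parameter space $\Theta$ is affine (closed under affine combinations, e.g. $\Theta=\mathbb{R}^D$), as for the Poisson, categorical, isotropic Gaussian and von Mises–Fisher families. For densities $p,r$ and $\lambda\neq0$, integer $i\ge2$, the power chi pseudo-distance is $\chi_{i,\lambda}^\pm(p:r)=\int \frac{(r(x)-\lambda p(x))^i}{p(x)^{i-1}}\,d\mu(x)$; here $(-\lambda)^j$ is the usual integer power. $\binom{s}{\alpha_1,\ldots,\alpha_l}$ denotes the multinomial coefficient. *)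

theory Defs
  imports "HOL-Analysis.Analysis"
begin

text \<open>Exponential family on a measure space M with sufficient statistic
  t : space M -> R^D (here real^'n) and carrier term k.\<close>

definition natparam :: "'a measure \<Rightarrow> ('a \<Rightarrow> real^'n) \<Rightarrow> ('a \<Rightarrow> real) \<Rightarrow> (real^'n) set" where
  "natparam M t k = {\<theta>. (\<integral>\<^sup>+ x. ennreal (exp (t x \<bullet> \<theta> + k x)) \<partial>M) < \<infinity>}"

definition lognorm :: "'a measure \<Rightarrow> ('a \<Rightarrow> real^'n) \<Rightarrow> ('a \<Rightarrow> real) \<Rightarrow> real^'n \<Rightarrow> real" where
  "lognorm M t k \<theta> = ln (\<integral> x. exp (t x \<bullet> \<theta> + k x) \<partial>M)"

definition expfam_density :: "'a measure \<Rightarrow> ('a \<Rightarrow> real^'n) \<Rightarrow> ('a \<Rightarrow> real) \<Rightarrow> real^'n \<Rightarrow> 'a \<Rightarrow> real" where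
  "expfam_density M t k \<theta> x = exp (t x \<bullet> \<theta> - lognorm M t k \<theta> + k x) * indicator (space M) x"

definition power_chi :: "'a measure \<Rightarrow> nat \<Rightarrow> real \<Rightarrow> ('a \<Rightarrow> real) \<Rightarrow> ('a \<Rightarrow> real) \<Rightarrow> real" where
  "power_chi M i lam p r = (\<integral> x. (r x - lam * p x) ^ i / p x ^ (i - 1) \<partial>M)"

definition multinomial_coeff :: "nat \<Rightarrow> nat \<Rightarrow> (nat \<Rightarrow> nat) \<Rightarrow> nat" where
  "multinomial_coeff s l \<alpha> = fact s div (\<Prod>u=1..l. fact (\<alpha> u))"

end

theory Submission
  imports Defs
begin

definition PS :: "nat set \<Rightarrow> nat \<Rightarrow> (nat \<Rightarrow> nat) set" where
  "PS A s = {\<alpha>. (\<forall>u. u \<notin> A \<longrightarrow> \<alpha> u = 0) \<and> sum \<alpha> A = s}"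

lemma PS_finite: assumes "finite A" shows "finite (PS A s)"
proof -
  have "PS A s \<subseteq> {f. \<forall>x. (x \<in> A \<longrightarrow> f x \<in> {0..s}) \<and> (x \<notin> A \<longrightarrow> f x = 0)}"
    unfolding PS_def using assms by (auto intro: member_le_sum)
  then show ?thesis using finite_set_of_finite_funs[OF assms, of "{0..s}" 0] finite_subset by blast
qed

lemma fact_prod_dvd: "finite A \<Longrightarrow> (\<Prod>u\<in>A. fact (\<beta> u) :: nat) dvd fact (sum \<beta> A)"
proof (induction A rule: finite_induct)
  case empty then show ?case by simp
next
  case (insert a A)
  have "fact (\<beta> a) * (\<Prod>u\<in>A. fact (\<beta> u)) dvd fact (\<beta> a) * (fact (sum \<beta> A) :: nat)"
    using insert by (simp add: mult_dvd_mono)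
  also have "\<dots> dvd fact (\<beta> a + sum \<beta> A)" by (rule fact_fact_dvd_fact)
  finally show ?case using insert by simp
qed

lemma upd_sum_notin: "a \<notin> A \<Longrightarrow> (\<Sum>u\<in>A. f ((\<beta>(a:=j)) u)) = (\<Sum>u\<in>A. f (\<beta> u))"
  by (rule sum.cong) auto
lemma upd_prod_notin: "a \<notin> A \<Longrightarrow> (\<Prod>u\<in>A. f u ((\<beta>(a:=j)) u)) = (\<Prod>u\<in>A. f u (\<beta> u))"
  by (rule prod.cong) auto
lemma upd_sum_notin': "a \<notin> A \<Longrightarrow> sum (\<beta>(a:=j)) A = sum \<beta> A"
  by (rule sum.cong) auto

lemma if_sum_notin: "a \<notin> A \<Longrightarrow> (\<Sum>u\<in>A. if u = a then c else f u) = sum f A"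
  by (rule sum.cong) auto
lemma if_prod_fact_notin: "a \<notin> A \<Longrightarrow> (\<Prod>u\<in>A. fact (if u = a then c else f u)) = (\<Prod>u\<in>A. fact (f u))"
  by (rule prod.cong) auto
lemma if_prod_pow_notin: "a \<notin> A \<Longrightarrow> (\<Prod>u\<in>A. x u ^ (if u = a then c else f u)) = (\<Prod>u\<in>A. x u ^ (f u))"
  by (rule prod.cong) auto

lemma PS_insert_sum:
  assumes "finite A" "a \<notin> A"
  shows "(\<Sum>\<alpha>\<in>PS (insert a A) s. g \<alpha>) = (\<Sum>j\<le>s. \<Sum>\<beta>\<in>PS A (s - j). g (\<beta>(a := j)))"
proof -
  have "(\<Sum>j\<le>s. \<Sum>\<beta>\<in>PS A (s - j). g (\<beta>(a := j))) = (\<Sum>(j,\<beta>)\<in>(SIGMA j:{..s}. PS A (s - j)). g (\<beta>(a := j)))"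
    by (rule sum.Sigma) (auto simp: PS_finite assms)
  also have "\<dots> = (\<Sum>\<alpha>\<in>PS (insert a A) s. g \<alpha>)"
  proof (rule sum.reindex_bij_witness[where i="\<lambda>\<alpha>. (\<alpha> a, \<alpha>(a := 0))"])
    fix \<alpha> assume "\<alpha> \<in> PS (insert a A) s"
    then show "(\<alpha> a, \<alpha>(a := 0)) \<in> (SIGMA j:{..s}. PS A (s - j))"
      using assms by (auto simp: PS_def if_sum_notin)
  next
    fix p assume "p \<in> (SIGMA j:{..s}. PS A (s - j))"
    then show "(case p of (j, \<beta>) \<Rightarrow> \<beta>(a := j)) \<in> PS (insert a A) s"
      using assms by (cases p) (auto simp: PS_def if_sum_notin)
  next
    fix p assume "p \<in> (SIGMA j:{..s}. PS A (s - j))"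
    then show "((case p of (j, \<beta>) \<Rightarrow> \<beta>(a := j)) a, (case p of (j, \<beta>) \<Rightarrow> \<beta>(a := j))(a := 0)) = p"
      using assms by (cases p) (auto simp: PS_def fun_eq_iff)
  qed auto
  finally show ?thesis by simp
qed

lemma multinomial_real:
  fixes x :: "nat \<Rightarrow> real"
  assumes "finite A"
  shows "(\<Sum>u\<in>A. x u) ^ s = (\<Sum>\<alpha>\<in>PS A s. fact s / (\<Prod>u\<in>A. fact (\<alpha> u)) * (\<Prod>u\<in>A. x u ^ \<alpha> u))"
  using assms
proof (induction A arbitrary: s rule: finite_induct)
  case empty
  have "PS {} s = (if s = 0 then {\<lambda>_. 0} else {})" by (auto simp: PS_def)
  then show ?case by simp
next
  case (insert a A)
  have "(\<Sum>u\<in>insert a A. x u) ^ s = (x a + (\<Sum>u\<in>A. x u)) ^ s" using insert by simp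
  also have "\<dots> = (\<Sum>j\<le>s. of_nat (s choose j) * x a ^ j * (\<Sum>u\<in>A. x u) ^ (s - j))"
    by (rule binomial_ring)
  also have "\<dots> = (\<Sum>j\<le>s. \<Sum>\<beta>\<in>PS A (s - j). fact s / (\<Prod>u\<in>insert a A. fact ((\<beta>(a:=j)) u)) * (\<Prod>u\<in>insert a A. x u ^ (\<beta>(a:=j)) u))"
  proof (rule sum.cong[OF refl])
    fix j assume j: "j \<in> {..s}"
    have "of_nat (s choose j) * x a ^ j * (\<Sum>u\<in>A. x u) ^ (s - j)
       = (\<Sum>\<beta>\<in>PS A (s - j). of_nat (s choose j) * x a ^ j * (fact (s-j) / (\<Prod>u\<in>A. fact (\<beta> u)) * (\<Prod>u\<in>A. x u ^ \<beta> u)))"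
      by (simp add: insert.IH sum_distrib_left)
    also have "\<dots> = (\<Sum>\<beta>\<in>PS A (s - j). fact s / (\<Prod>u\<in>insert a A. fact ((\<beta>(a:=j)) u)) * (\<Prod>u\<in>insert a A. x u ^ (\<beta>(a:=j)) u))"
    proof (rule sum.cong[OF refl])
      fix \<beta> assume "\<beta> \<in> PS A (s - j)"
      have p1: "(\<Prod>u\<in>insert a A. fact ((\<beta>(a:=j)) u) :: real) = fact j * (\<Prod>u\<in>A. fact (\<beta> u))"
        using insert by (simp add: if_prod_fact_notin)
      have p2: "(\<Prod>u\<in>insert a A. x u ^ (\<beta>(a:=j)) u) = x a ^ j * (\<Prod>u\<in>A. x u ^ \<beta> u)"
        using insert by (simp add: if_prod_pow_notin)
      have bf: "real (s choose j) = fact s / (fact j * fact (s - j))"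
        using j by (simp add: binomial_fact)
      have nz: "(\<Prod>u\<in>A. fact (\<beta> u) :: real) \<noteq> 0" by (simp add: prod_zero_iff insert)
      show "of_nat (s choose j) * x a ^ j * (fact (s-j) / (\<Prod>u\<in>A. fact (\<beta> u)) * (\<Prod>u\<in>A. x u ^ \<beta> u))
          = fact s / (\<Prod>u\<in>insert a A. fact ((\<beta>(a:=j)) u)) * (\<Prod>u\<in>insert a A. x u ^ (\<beta>(a:=j)) u)"
        unfolding p1 p2 bf using nz by (simp add: field_simps)
    qed
    finally show "of_nat (s choose j) * x a ^ j * (\<Sum>u\<in>A. x u) ^ (s - j) = \<dots>" .
  qed
  also have "\<dots> = (\<Sum>\<alpha>\<in>PS (insert a A) s. fact s / (\<Prod>u\<in>insert a A. fact (\<alpha> u)) * (\<Prod>u\<in>insert a A. x u ^ \<alpha> u))"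
    by (rule PS_insert_sum[symmetric]) (use insert in auto)
  finally show ?case .
qed


lemma affine_comb:
  fixes S :: "'b::real_vector set"
  assumes "affine S" "th \<in> S" "finite A" "\<forall>u\<in>A. ths u \<in> S"
  shows "th + (\<Sum>u\<in>A. c u *\<^sub>R (ths u - th)) \<in> S"
  using assms(3,4)
proof (induction A rule: finite_induct)
  case empty then show ?case using assms by simp
next
  case (insert a A)
  have "(th + (\<Sum>u\<in>A. c u *\<^sub>R (ths u - th))) + c a *\<^sub>R (ths a - th) \<in> S"
    by (rule mem_affine_3_minus) (use insert assms in auto)
  then show ?case using insert by (simp add: algebra_simps)
qed

lemma exp_integral:
  fixes M :: "'a measure" and t :: "'a \<Rightarrow> real^'n"
  assumes "emeasure M (space M) \<noteq> 0" "t \<in> borel_measurable M" "k \<in> borel_measurable M"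
    and "th \<in> natparam M t k"
  shows "integrable M (\<lambda>x. exp (t x \<bullet> th + k x)) \<and> exp (lognorm M t k th) = (\<integral>x. exp (t x \<bullet> th + k x) \<partial>M)"
proof -
  have meas: "(\<lambda>x. exp (t x \<bullet> th + k x)) \<in> borel_measurable M" using assms by measurable
  have int: "integrable M (\<lambda>x. exp (t x \<bullet> th + k x))"
    by (rule integrableI_nonneg[OF meas]) (use assms in \<open>auto simp: natparam_def\<close>)
  have "(\<integral>x. exp (t x \<bullet> th + k x) \<partial>M) \<noteq> 0"
  proof
    assume "(\<integral>x. exp (t x \<bullet> th + k x) \<partial>M) = 0"
    then have "AE x in M. exp (t x \<bullet> th + k x) = 0"
      using integral_nonneg_eq_0_iff_AE[OF int] by auto
    then have "AE x in M. False" by simp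
    then show False using assms(1) ae_filter_eq_bot_iff eventually_False by metis
  qed
  moreover have "(\<integral>x. exp (t x \<bullet> th + k x) \<partial>M) \<ge> 0" by (intro integral_nonneg_AE) auto
  ultimately have "(\<integral>x. exp (t x \<bullet> th + k x) \<partial>M) > 0" by linarith
  then show ?thesis using int by (simp add: lognorm_def)
qed

theorem theorem1:
  fixes M :: "'a measure" and t :: "'a \<Rightarrow> real^'n" and k :: "'a \<Rightarrow> real"
    and \<theta> :: "real^'n" and \<theta>s :: "nat \<Rightarrow> real^'n" and w :: "nat \<Rightarrow> real"
    and l i :: nat and lam :: real
  assumes "sigma_finite_measure M"
    and "emeasure M (space M) \<noteq> 0"
    and "t \<in> borel_measurable M" and "k \<in> borel_measurable M"
    and "affine (natparam M t k)"
    and "\<theta> \<in> natparam M t k"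
    and "\<forall>u\<in>{1..l}. \<theta>s u \<in> natparam M t k"
    and "\<forall>u\<in>{1..l}. w u > 0" and "(\<Sum>u=1..l. w u) = 1"
    and "lam \<noteq> 0" and "i \<ge> 2"
  shows "integrable M (\<lambda>x. ((\<Sum>u=1..l. w u * expfam_density M t k (\<theta>s u) x)
                               - lam * expfam_density M t k \<theta> x) ^ i
                             / expfam_density M t k \<theta> x ^ (i - 1))
    \<and> power_chi M i lam (expfam_density M t k \<theta>)
        (\<lambda>x. \<Sum>u=1..l. w u * expfam_density M t k (\<theta>s u) x)
      = (\<Sum>s=0..i. real (i choose s) * (- lam) ^ (i - s) *
          (\<Sum>\<alpha>\<in>{\<alpha>::nat\<Rightarrow>nat. (\<forall>u. u \<notin> {1..l} \<longrightarrow> \<alpha> u = 0) \<and> (\<Sum>u=1..l. \<alpha> u) = s}.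
             real (multinomial_coeff s l \<alpha>) * (\<Prod>u=1..l. w u ^ \<alpha> u) *
             exp (lognorm M t k ((1 - real s) *\<^sub>R \<theta> + (\<Sum>u=1..l. real (\<alpha> u) *\<^sub>R \<theta>s u))
                  - ((1 - real s) * lognorm M t k \<theta> + (\<Sum>u=1..l. real (\<alpha> u) * lognorm M t k (\<theta>s u))))))"
  proof -
  let ?F = "lognorm M t k"
  let ?S = "natparam M t k"
  let ?p = "expfam_density M t k \<theta>"
  let ?q = "\<lambda>u. expfam_density M t k (\<theta>s u)"
  define th where "th s \<alpha> = (1 - real s) *\<^sub>R \<theta> + (\<Sum>u=1..l. real (\<alpha> u) *\<^sub>R \<theta>s u)" for s and \<alpha> :: "nat \<Rightarrow> nat"
  define E where "E s \<alpha> = (1 - real s) * ?F \<theta> + (\<Sum>u=1..l. real (\<alpha> u) * ?F (\<theta>s u))" for s and \<alpha> :: "nat \<Rightarrow> nat"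
  define c where "c s \<alpha> = real (i choose s) * (- lam) ^ (i - s) * (real (multinomial_coeff s l \<alpha>) * (\<Prod>u=1..l. w u ^ \<alpha> u))" for s and \<alpha> :: "nat \<Rightarrow> nat"
  define g where "g x = (\<Sum>s=0..i. \<Sum>\<alpha>\<in>PS {1..l} s. c s \<alpha> * exp (- E s \<alpha>) * exp (t x \<bullet> th s \<alpha> + k x))" for x
  have sumreal: "(\<Sum>u=1..l. real (\<alpha> u)) = real s" if "\<alpha> \<in> PS {1..l} s" for s \<alpha>
    using that by (simp add: PS_def flip: of_nat_sum)
  have th_in: "th s \<alpha> \<in> ?S" if "\<alpha> \<in> PS {1..l} s" for s \<alpha>
  proof -
    have "th s \<alpha> = \<theta> + (\<Sum>u=1..l. real (\<alpha> u) *\<^sub>R (\<theta>s u - \<theta>))"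
      by (simp add: th_def scaleR_right_diff_distrib sum_subtractf algebra_simps
          flip: scaleR_sum_left sumreal[OF that])
    also have "\<dots> \<in> ?S" by (rule affine_comb) (use assms in auto)
    finally show ?thesis .
  qed
  have ei: "integrable M (\<lambda>x. exp (t x \<bullet> th s \<alpha> + k x)) \<and> exp (?F (th s \<alpha>)) = (\<integral>x. exp (t x \<bullet> th s \<alpha> + k x) \<partial>M)"
    if "\<alpha> \<in> PS {1..l} s" for s \<alpha>
    by (rule exp_integral) (use assms th_in[OF that] in auto)
  have pw: "((\<Sum>u=1..l. w u * ?q u x) - lam * ?p x) ^ i / ?p x ^ (i - 1) = g x" if x: "x \<in> space M" for x
  proof -
    let ?a = "t x \<bullet> \<theta> + k x - ?F \<theta>"
    let ?b = "\<lambda>u. t x \<bullet> \<theta>s u + k x - ?F (\<theta>s u)"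
    have p: "?p x = exp ?a" using x by (simp add: expfam_density_def)
    have q: "?q u x = exp (?b u)" for u using x by (simp add: expfam_density_def)
    have key: "?p x ^ (i - s) / ?p x ^ (i - 1) * (\<Prod>u=1..l. ?q u x ^ \<alpha> u)
        = exp (- E s \<alpha>) * exp (t x \<bullet> th s \<alpha> + k x)"
      if s: "s \<le> i" and al: "\<alpha> \<in> PS {1..l} s" for s \<alpha>
    proof -
      have "?p x ^ (i - s) / ?p x ^ (i - 1) = exp ((1 - real s) * ?a)"
        using s assms(11) by (simp add: p flip: exp_of_nat_mult exp_diff) (simp add: of_nat_diff algebra_simps)
      moreover have "(\<Prod>u=1..l. ?q u x ^ \<alpha> u) = exp (\<Sum>u=1..l. real (\<alpha> u) * ?b u)"
        by (simp add: q exp_sum flip: exp_of_nat_mult)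
      moreover have "(1 - real s) * ?a + (\<Sum>u=1..l. real (\<alpha> u) * ?b u) = - E s \<alpha> + (t x \<bullet> th s \<alpha> + k x)"
      proof -
        have "(\<Sum>u=1..l. real (\<alpha> u) * ?b u) = (\<Sum>u=1..l. real (\<alpha> u) * (t x \<bullet> \<theta>s u)) + (\<Sum>u=1..l. real (\<alpha> u)) * k x - (\<Sum>u=1..l. real (\<alpha> u) * ?F (\<theta>s u))"
          by (simp add: algebra_simps sum.distrib sum_subtractf sum_distrib_right sum_distrib_left)
        moreover have "t x \<bullet> th s \<alpha> = (1 - real s) * (t x \<bullet> \<theta>) + (\<Sum>u=1..l. real (\<alpha> u) * (t x \<bullet> \<theta>s u))"
          by (simp add: th_def inner_add_right inner_sum_right)
        ultimately show ?thesis using sumreal[OF al] by (simp add: E_def algebra_simps)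
      qed
      ultimately show ?thesis by (simp flip: exp_add)
    qed
    have "((\<Sum>u=1..l. w u * ?q u x) - lam * ?p x) ^ i = ((\<Sum>u=1..l. w u * ?q u x) + (- lam * ?p x)) ^ i"
      by simp
    also have "\<dots> = (\<Sum>s=0..i. real (i choose s) * (\<Sum>u=1..l. w u * ?q u x) ^ s * (- lam * ?p x) ^ (i - s))"
      unfolding binomial_ring atLeast0AtMost by simp
    finally have "((\<Sum>u=1..l. w u * ?q u x) - lam * ?p x) ^ i / ?p x ^ (i - 1)
       = (\<Sum>s=0..i. real (i choose s) * (- lam) ^ (i - s) * (?p x ^ (i - s) / ?p x ^ (i - 1)) * (\<Sum>u=1..l. w u * ?q u x) ^ s)"
      unfolding power_mult_distrib by (simp only: sum_divide_distrib) (intro sum.cong refl, simp add: algebra_simps)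
    also have "\<dots> = g x"
      unfolding g_def
    proof (rule sum.cong[OF refl])
      fix s assume s: "s \<in> {0..i}"
      have "(\<Sum>u=1..l. w u * ?q u x) ^ s = (\<Sum>\<alpha>\<in>PS {1..l} s. fact s / (\<Prod>u=1..l. fact (\<alpha> u)) * (\<Prod>u=1..l. (w u * ?q u x) ^ \<alpha> u))"
        by (rule multinomial_real) simp
      also have "\<dots> = (\<Sum>\<alpha>\<in>PS {1..l} s. real (multinomial_coeff s l \<alpha>) * (\<Prod>u=1..l. w u ^ \<alpha> u) * (\<Prod>u=1..l. ?q u x ^ \<alpha> u))"
      proof (rule sum.cong[OF refl])
        fix \<alpha> assume al: "\<alpha> \<in> PS {1..l} s"
        have "(\<Prod>u=1..l. fact (\<alpha> u) :: nat) dvd fact s"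
          using fact_prod_dvd[of "{1..l}" \<alpha>] al by (simp add: PS_def)
        then have "real (multinomial_coeff s l \<alpha>) = fact s / (\<Prod>u=1..l. fact (\<alpha> u))"
          unfolding multinomial_coeff_def by (simp add: real_of_nat_div of_nat_prod)
        then show "fact s / (\<Prod>u=1..l. fact (\<alpha> u)) * (\<Prod>u=1..l. (w u * ?q u x) ^ \<alpha> u)
          = real (multinomial_coeff s l \<alpha>) * (\<Prod>u=1..l. w u ^ \<alpha> u) * (\<Prod>u=1..l. ?q u x ^ \<alpha> u)"
          by (simp add: power_mult_distrib prod.distrib)
      qed
      finally have "real (i choose s) * (- lam) ^ (i - s) * (?p x ^ (i - s) / ?p x ^ (i - 1)) * (\<Sum>u=1..l. w u * ?q u x) ^ s
        = (\<Sum>\<alpha>\<in>PS {1..l} s. real (i choose s) * (- lam) ^ (i - s) * (real (multinomial_coeff s l \<alpha>) * (\<Prod>u=1..l. w u ^ \<alpha> u))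
             * (?p x ^ (i - s) / ?p x ^ (i - 1) * (\<Prod>u=1..l. ?q u x ^ \<alpha> u)))"
        by (simp add: sum_distrib_left algebra_simps)
      also have "\<dots> = (\<Sum>\<alpha>\<in>PS {1..l} s. c s \<alpha> * exp (- E s \<alpha>) * exp (t x \<bullet> th s \<alpha> + k x))"
      proof (rule sum.cong[OF refl])
        fix \<alpha> assume al: "\<alpha> \<in> PS {1..l} s"
        have si: "s \<le> i" using s by simp
        show "real (i choose s) * (- lam) ^ (i - s) * (real (multinomial_coeff s l \<alpha>) * (\<Prod>u=1..l. w u ^ \<alpha> u))
             * (?p x ^ (i - s) / ?p x ^ (i - 1) * (\<Prod>u=1..l. ?q u x ^ \<alpha> u)) = c s \<alpha> * exp (- E s \<alpha>) * exp (t x \<bullet> th s \<alpha> + k x)"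
          unfolding key[OF si al] c_def by (simp only: mult.assoc)
      qed
      finally show "real (i choose s) * (- lam) ^ (i - s) * (?p x ^ (i - s) / ?p x ^ (i - 1)) * (\<Sum>u=1..l. w u * ?q u x) ^ s
        = (\<Sum>\<alpha>\<in>PS {1..l} s. c s \<alpha> * exp (- E s \<alpha>) * exp (t x \<bullet> th s \<alpha> + k x))" .
    qed
    finally show ?thesis .
  qed
  have intg: "integrable M g"
  proof -
    have "integrable M (\<lambda>x. c s \<alpha> * exp (- E s \<alpha>) * exp (t x \<bullet> th s \<alpha> + k x))"
      if "\<alpha> \<in> PS {1..l} s" for s \<alpha>
      using ei[OF that] by (intro integrable_mult_right) simp
    then have "integrable M (\<lambda>x. \<Sum>s=0..i. \<Sum>\<alpha>\<in>PS {1..l} s. c s \<alpha> * exp (- E s \<alpha>) * exp (t x \<bullet> th s \<alpha> + k x))"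
      by (intro Bochner_Integration.integrable_sum) blast
    then show ?thesis by (simp add: g_def[abs_def])
  qed
  have int1: "integrable M (\<lambda>x. ((\<Sum>u=1..l. w u * ?q u x) - lam * ?p x) ^ i / ?p x ^ (i - 1))"
  proof -
    have "integrable M (\<lambda>x. ((\<Sum>u=1..l. w u * ?q u x) - lam * ?p x) ^ i / ?p x ^ (i - 1)) \<longleftrightarrow> integrable M g"
      by (rule Bochner_Integration.integrable_cong[OF refl], rule pw)
    then show ?thesis using intg by simp
  qed
  have "power_chi M i lam ?p (\<lambda>x. \<Sum>u=1..l. w u * ?q u x) = (\<integral>x. g x \<partial>M)"
    unfolding power_chi_def by (rule Bochner_Integration.integral_cong[OF refl], rule pw)
  also have "\<dots> = (\<Sum>s=0..i. \<Sum>\<alpha>\<in>PS {1..l} s. c s \<alpha> * exp (- E s \<alpha>) * exp (?F (th s \<alpha>)))"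
  proof -
    have ii: "integrable M (\<lambda>x. c s \<alpha> * exp (- E s \<alpha>) * exp (t x \<bullet> th s \<alpha> + k x))"
      if "\<alpha> \<in> PS {1..l} s" for s \<alpha>
      using ei[OF that] by (intro integrable_mult_right) simp
    have "(\<integral>x. g x \<partial>M) = (\<Sum>s=0..i. \<integral>x. (\<Sum>\<alpha>\<in>PS {1..l} s. c s \<alpha> * exp (- E s \<alpha>) * exp (t x \<bullet> th s \<alpha> + k x)) \<partial>M)"
      unfolding g_def using ii by (intro Bochner_Integration.integral_sum Bochner_Integration.integrable_sum) blast
    also have "\<dots> = (\<Sum>s=0..i. \<Sum>\<alpha>\<in>PS {1..l} s. \<integral>x. c s \<alpha> * exp (- E s \<alpha>) * exp (t x \<bullet> th s \<alpha> + k x) \<partial>M)"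
      using ii by (intro sum.cong refl Bochner_Integration.integral_sum) blast
    also have "\<dots> = (\<Sum>s=0..i. \<Sum>\<alpha>\<in>PS {1..l} s. c s \<alpha> * exp (- E s \<alpha>) * exp (?F (th s \<alpha>)))"
      using ei by (intro sum.cong refl) (simp add: integral_mult_right_zero)
    finally show ?thesis .
  qed
  also have "\<dots> = (\<Sum>s=0..i. real (i choose s) * (- lam) ^ (i - s) *
          (\<Sum>\<alpha>\<in>PS {1..l} s. real (multinomial_coeff s l \<alpha>) * (\<Prod>u=1..l. w u ^ \<alpha> u) *
             exp (?F (th s \<alpha>) - E s \<alpha>)))"
    by (simp add: sum_distrib_left c_def exp_diff exp_minus field_simps)
  finally show ?thesis using int1 unfolding PS_def th_def E_def by simp
qed

end
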